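(* Assume the setting and hypotheses (i)–(iii) of the following context, with parameters $\alpha,\alpha_0,\beta'>0$. Let $w_{\min}:=\min_i w_i$, and let $$q:=\frac{2w_{\max}}{w_{\min}}\Big[\frac{2\alpha}{\sqrt d}\Big(1+\alpha_0\sqrt{\tfrac kd}\Big)^2+\beta'\Big],$$ and assume $q<1/2$. Let $\Psi$ be a tensor with $\psi:=\|\Psi\|\le w_{\min}/6$, and $\hat T=T+\Psi$. Fix $j\in[k]$ and unit vectors $\hat a,\hat b$ with $\epsilon_0:=\max\{\mathrm{dist}(\hat a,a_j),\mathrm{dist}(\hat b,b_j)\}$ satisfying $$\epsilon_0\le\min\Big\{\frac{\beta'}{\alpha_0},\ \sqrt{\frac{w_{\min}}{6w_{\max}}},\ \frac{w_{\min}q}{4w_{\max}},\ \frac{2w_{\max}}{w_{\min}q}\Big(\frac{w_{\min}}{6w_{\max}}-\alpha\frac{\sqrt k}{d}\Big)\Big\}.$$ Let $\hat c:=\hat T(\hat a,\hat b,I)/\|\hat T(\hat a,\hat b,I)\|$ and $\mathrm{Const}:=\frac{2}{w_{\min}}\big(\psi+w_{\max}\alpha\frac{\sqrt k}{d}\big)$. Then $\mathrm{dist}(\hat c,c_j)\le \mathrm{Const}+q\epsilon_0$. Moreover, if $\mathrm{dist}(\hat c,c_j)\le\epsilon_0$, then $\hat w:=\hat T(\hat a,\hat b,\hat c)$ satisfies $|\hat w-w_j|\le \frac{w_{\min}}{2}\mathrm{Const}+w_{\min}q\epsilon_0$.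
   Context: Setting: $w_1,\dots,w_k>0$, $w_{\max}=\max_i w_i$; $a_i,b_i,c_i\in\mathbb{R}^d$ unit vectors; $T=\sum_{i\in[k]}w_i a_i\otimes b_i\otimes c_i$; $A=[a_1\cdots a_k]$, $B$, $C$ similarly. Hypotheses: (i) $\max_{i\ne j}\max\{|\langle a_i,a_j\rangle|,|\langle b_i,b_j\rangle|,|\langle c_i,c_j\rangle|\}\le\alpha/\sqrt d$; (ii) $\max\{\|A\|,\|B\|,\|C\|\}\le 1+\alpha_0\sqrt{k/d}$; (iii) $\|T\|\le\alpha_0w_{\max}$ and for every $j$, $\|\sum_{i\ne j}w_i\langle a_i,a_j\rangle\langle b_i,b_j\rangle c_i\|\le\alpha w_{\max}\sqrt k/d$. Multilinear form: $T(u,v,w)=\sum_{i,j,l}T_{ijl}u_iv_jw_l$; $T(u,v,I)$ is the vector with $l$-th entry $\sum_{i,j}T_{ijl}u_iv_j$. Tensor spectral norm $\|T\|=\sup_{\|u\|=\|v\|=\|w\|=1}|T(u,v,w)|$; matrix norms are spectral norms. $\mathrm{dist}(u,v):=\sup_{z\perp u}\frac{\langle z,v\rangle}{\|z\|\|v\|}$. *)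

theory Defs
  imports "HOL-Analysis.Analysis"
begin

type_synonym 'd tensor3 = "'d \<Rightarrow> 'd \<Rightarrow> 'd \<Rightarrow> real"

definition tform :: "'d::finite tensor3 \<Rightarrow> real^'d \<Rightarrow> real^'d \<Rightarrow> real^'d \<Rightarrow> real" where
  "tform T u v w = (\<Sum>i\<in>UNIV. \<Sum>j\<in>UNIV. \<Sum>l\<in>UNIV. T i j l * u$i * v$j * w$l)"

definition tform_I :: "'d::finite tensor3 \<Rightarrow> real^'d \<Rightarrow> real^'d \<Rightarrow> real^'d" where
  "tform_I T u v = (\<chi> l. \<Sum>i\<in>UNIV. \<Sum>j\<in>UNIV. T i j l * u$i * v$j)"

definition tnorm :: "'d::finite tensor3 \<Rightarrow> real" where
  "tnorm T = Sup {\<bar>tform T u v w\<bar> | u v w. norm u = 1 \<and> norm v = 1 \<and> norm w = 1}"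

definition cp_tensor :: "('k::finite \<Rightarrow> real) \<Rightarrow> ('k \<Rightarrow> real^'d) \<Rightarrow> ('k \<Rightarrow> real^'d) \<Rightarrow> ('k \<Rightarrow> real^'d) \<Rightarrow> 'd::finite tensor3" where
  "cp_tensor w a b c = (\<lambda>p q r. \<Sum>i\<in>UNIV. w i * (a i)$p * (b i)$q * (c i)$r)"

text \<open>Spectral norm of the d x k matrix with columns a_1..a_k (operator norm).\<close>
definition colmat_norm :: "('k::finite \<Rightarrow> real^'d::finite) \<Rightarrow> real" where
  "colmat_norm a = onorm (\<lambda>x::real^'k. \<Sum>i\<in>UNIV. x$i *\<^sub>R a i)"

text \<open>dist(u,v) := sup_{z perp u} <z,v>/(|z||v|)  (z = 0 contributes 0 by the convention x/0 = 0).\<close>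
definition vdist :: "real^'d::finite \<Rightarrow> real^'d \<Rightarrow> real" where
  "vdist u v = Sup {(z \<bullet> v) / (norm z * norm v) | z. z \<bullet> u = 0}"

end

theory Submission
  imports Defs
begin


lemma sum_prod_aux: "(\<Sum>p\<in>UNIV. \<Sum>q\<in>UNIV. (W::real) * a $ p * b $ q * C * u $ p * v $ q)
   = W * (\<Sum>p\<in>(UNIV::'d::finite set). a $ p * u $ p) * (\<Sum>q\<in>(UNIV::'e::finite set). b $ q * v $ q) * C"
proof -
  have "W * (\<Sum>p\<in>(UNIV::'d set). a $ p * u $ p) * (\<Sum>q\<in>(UNIV::'e set). b $ q * v $ q) * C
     = (W*C) * ((\<Sum>p\<in>(UNIV::'d set). a $ p * u $ p) * (\<Sum>q\<in>(UNIV::'e set). b $ q * v $ q))" by simp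
  also have "\<dots> = (W*C) * (\<Sum>p\<in>UNIV. \<Sum>q\<in>UNIV. (a $ p * u $ p) * (b $ q * v $ q))"
    by (simp only: sum_product)
  also have "\<dots> = (\<Sum>p\<in>UNIV. \<Sum>q\<in>UNIV. (W*C) * ((a $ p * u $ p) * (b $ q * v $ q)))"
    by (simp only: sum_distrib_left)
  also have "\<dots> = (\<Sum>p\<in>UNIV. \<Sum>q\<in>UNIV. W * a $ p * b $ q * C * u $ p * v $ q)"
    by (intro sum.cong refl) (simp add: ac_simps)
  finally show ?thesis by simp
qed

lemma tform_I_cp:
  "tform_I (cp_tensor w a b c) u v = (\<Sum>i\<in>UNIV. (w i * (a i \<bullet> u) * (b i \<bullet> v)) *\<^sub>R c i)"
proof -
  have "(\<Sum>p\<in>UNIV. \<Sum>q\<in>UNIV. (\<Sum>i\<in>UNIV. w i * a i $ p * b i $ q * c i $ l) * u $ p * v $ q)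
     = (\<Sum>i\<in>UNIV. w i * (\<Sum>p\<in>UNIV. a i $ p * u $ p) * (\<Sum>q\<in>UNIV. b i $ q * v $ q) * c i $ l)" for l
  proof -
    have "(\<Sum>p\<in>UNIV. \<Sum>q\<in>UNIV. (\<Sum>i\<in>UNIV. w i * a i $ p * b i $ q * c i $ l) * u $ p * v $ q)
      = (\<Sum>p\<in>UNIV. \<Sum>q\<in>UNIV. \<Sum>i\<in>UNIV. w i * a i $ p * b i $ q * c i $ l * u $ p * v $ q)"
      by (simp add: sum_distrib_right)
    also have "\<dots> = (\<Sum>i\<in>UNIV. \<Sum>p\<in>UNIV. \<Sum>q\<in>UNIV. w i * a i $ p * b i $ q * c i $ l * u $ p * v $ q)"
      by (subst sum.swap, rule sum.cong, simp, rule sum.swap)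
    also have "\<dots> = (\<Sum>i\<in>UNIV. w i * (\<Sum>p\<in>UNIV. a i $ p * u $ p) * (\<Sum>q\<in>UNIV. b i $ q * v $ q) * c i $ l)"
      by (rule sum.cong, simp, rule sum_prod_aux)
    finally show ?thesis .
  qed
  then show ?thesis
    unfolding tform_I_def cp_tensor_def vec_eq_iff
    by (simp add: sum_component inner_vec_def)
qed

lemma tform_I_add:
  "tform_I (\<lambda>p r s. T p r s + P p r s) u v = tform_I T u v + tform_I P u v"
  unfolding tform_I_def vec_eq_iff by (simp add: distrib_right sum.distrib)

lemma tform_eq: "tform T u v w = tform_I T u v \<bullet> w"
proof -
  have "tform_I T u v \<bullet> w = (\<Sum>l\<in>UNIV. \<Sum>i\<in>UNIV. \<Sum>j\<in>UNIV. T i j l * u$i * v$j * w$l)"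
    unfolding tform_I_def inner_vec_def by (simp only: vec_lambda_beta inner_real_def sum_distrib_right)
  also have "\<dots> = (\<Sum>i\<in>UNIV. \<Sum>l\<in>UNIV. \<Sum>j\<in>UNIV. T i j l * u$i * v$j * w$l)"
    by (rule sum.swap)
  also have "\<dots> = (\<Sum>i\<in>UNIV. \<Sum>j\<in>UNIV. \<Sum>l\<in>UNIV. T i j l * u$i * v$j * w$l)"
    by (rule sum.cong[OF refl], rule sum.swap)
  finally show ?thesis unfolding tform_def by simp
qed

lemma tform_scale1: "tform T (r *\<^sub>R u) v w = r * tform T u v w"
  unfolding tform_def by (simp add: sum_distrib_left mult.commute mult.left_commute)
lemma tform_scale2: "tform T u (r *\<^sub>R v) w = r * tform T u v w"
  unfolding tform_def by (simp add: sum_distrib_left mult.commute mult.left_commute)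
lemma tform_scale3: "tform T u v (r *\<^sub>R w) = r * tform T u v w"
  unfolding tform_def by (simp add: sum_distrib_left mult.commute mult.left_commute)

lemma tnorm_bdd: "bdd_above {\<bar>tform T u v w\<bar> | u v w. norm u = 1 \<and> norm v = 1 \<and> norm w = 1}"
proof (rule bdd_aboveI[where M="\<Sum>i\<in>UNIV. \<Sum>j\<in>UNIV. \<Sum>l\<in>UNIV. \<bar>T i j l\<bar>"], clarify)
  fix u v w :: "real^'a" assume n: "norm u = 1" "norm v = 1" "norm w = 1"
  have c: "\<bar>x $ i\<bar> \<le> 1" if "norm x = 1" for x :: "real^'a" and i
    using component_le_norm_cart[of x i] that by simp
  have "\<bar>tform T u v w\<bar> \<le> (\<Sum>i\<in>UNIV. \<Sum>j\<in>UNIV. \<Sum>l\<in>UNIV. \<bar>T i j l * u$i * v$j * w$l\<bar>)"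
    unfolding tform_def
    by (rule order_trans[OF sum_abs], rule sum_mono, rule order_trans[OF sum_abs], rule sum_mono, rule sum_abs)
  also have "\<dots> \<le> (\<Sum>i\<in>UNIV. \<Sum>j\<in>UNIV. \<Sum>l\<in>UNIV. \<bar>T i j l\<bar>)"
  proof (intro sum_mono)
    fix i j l
    have "\<bar>u$i\<bar> \<le> 1" "\<bar>v$j\<bar> \<le> 1" "\<bar>w$l\<bar> \<le> 1" using c n by auto
    then have "\<bar>u$i\<bar> * \<bar>v$j\<bar> \<le> 1" by (intro mult_le_one) auto
    then have "\<bar>u$i\<bar> * \<bar>v$j\<bar> * \<bar>w$l\<bar> \<le> 1" using mult_le_one[OF _ abs_ge_zero \<open>\<bar>w$l\<bar> \<le> 1\<close>] by blast
    then have "\<bar>T i j l\<bar> * (\<bar>u$i\<bar> * \<bar>v$j\<bar> * \<bar>w$l\<bar>) \<le> \<bar>T i j l\<bar>"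
      by (simp add: mult_left_le)
    then show "\<bar>T i j l * u$i * v$j * w$l\<bar> \<le> \<bar>T i j l\<bar>" by (simp add: abs_mult mult.assoc)
  qed
  finally show "\<bar>tform T u v w\<bar> \<le> (\<Sum>i\<in>UNIV. \<Sum>j\<in>UNIV. \<Sum>l\<in>UNIV. \<bar>T i j l\<bar>)" .
qed

lemma tnorm_nonneg: "tnorm (T::'a::finite tensor3) \<ge> 0"
proof -
  obtain i :: 'a where True by simp
  let ?e = "axis i (1::real)"
  have "\<bar>tform T ?e ?e ?e\<bar> \<le> tnorm T" unfolding tnorm_def
  proof (rule cSup_upper[OF _ tnorm_bdd])
    show "\<bar>tform T ?e ?e ?e\<bar> \<in> {\<bar>tform T u v w\<bar> | u v w. norm u = 1 \<and> norm v = 1 \<and> norm w = 1}"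
      using norm_axis_1 by blast
  qed
  then show ?thesis by linarith
qed

lemma tform_le: "\<bar>tform T u v w\<bar> \<le> tnorm T * norm u * norm v * norm w"
proof (cases "u = 0 \<or> v = 0 \<or> w = 0")
  case True
  then have "tform T u v w = 0" using tform_scale1[of T 0 u v w] tform_scale2[of T u 0 v w] tform_scale3[of T u v 0 w]
    by auto
  then show ?thesis using tnorm_nonneg[of T] by simp
next
  case False
  then have p: "norm u > 0" "norm v > 0" "norm w > 0" by auto
  let ?u = "(1/norm u) *\<^sub>R u" and ?v = "(1/norm v) *\<^sub>R v" and ?w = "(1/norm w) *\<^sub>R w"
  have "\<bar>tform T ?u ?v ?w\<bar> \<le> tnorm T" unfolding tnorm_def
  proof (rule cSup_upper[OF _ tnorm_bdd])
    have "norm ?u = 1" "norm ?v = 1" "norm ?w = 1" using p by auto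
    then show "\<bar>tform T ?u ?v ?w\<bar> \<in> {\<bar>tform T u v w\<bar> | u v w. norm u = 1 \<and> norm v = 1 \<and> norm w = 1}"
      by blast
  qed
  moreover have "tform T ?u ?v ?w = tform T u v w / (norm u * norm v * norm w)"
    by (simp add: tform_scale1 tform_scale2 tform_scale3)
  ultimately have "\<bar>tform T u v w\<bar> / (norm u * norm v * norm w) \<le> tnorm T"
    using p by (simp add: abs_divide)
  moreover have "norm u * norm v * norm w > 0" using p by simp
  ultimately show ?thesis by (simp add: pos_divide_le_eq mult.assoc)
qed

lemma tform_I_le: "norm (tform_I T u v) \<le> tnorm T * norm u * norm v"
proof -
  let ?g = "tform_I T u v"
  have "norm ?g ^ 2 = tform T u v ?g" by (simp add: tform_eq power2_norm_eq_inner)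
  also have "\<dots> \<le> tnorm T * norm u * norm v * norm ?g" using tform_le[of T u v ?g] abs_ge_self[of "tform T u v ?g"] by linarith
  finally have h: "norm ?g * norm ?g \<le> (tnorm T * norm u * norm v) * norm ?g" by (simp only: power2_eq_square)
  show ?thesis
  proof (cases "norm ?g = 0")
    case True
    have "0 \<le> \<bar>tform T u v ?g\<bar>" by simp
    then show ?thesis using True tnorm_nonneg[of T] by simp
  next
    case False then have "norm ?g > 0" by simp
    then show ?thesis using h by (rule mult_right_le_imp_le[rotated])
  qed
qed




lemma div_le_1_aux: "(x::real) \<le> y \<Longrightarrow> 0 \<le> y \<Longrightarrow> x / y \<le> 1"
  by (cases "y = 0") (auto simp: divide_le_eq_1)

lemma vdist_bdd: "bdd_above {(z \<bullet> v) / (norm z * norm v) | z. z \<bullet> u = 0}"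
proof (rule bdd_aboveI[where M=1], clarify)
  fix z
  have "z \<bullet> v \<le> norm z * norm v" by (rule norm_cauchy_schwarz)
  then show "(z \<bullet> v) / (norm z * norm v) \<le> 1" by (rule div_le_1_aux) simp
qed

lemma vdist_le:
  assumes "\<And>z. z \<bullet> u = 0 \<Longrightarrow> (z \<bullet> v) / (norm z * norm v) \<le> B"
  shows "vdist u v \<le> B"
  unfolding vdist_def
proof (rule cSup_least)
  have "(0 \<bullet> v) / (norm 0 * norm v) \<in> {(z \<bullet> v) / (norm z * norm v) | z. z \<bullet> u = 0}" by auto
  then show "{(z \<bullet> v) / (norm z * norm v) | z. z \<bullet> u = 0} \<noteq> {}" by (metis empty_iff)
next
  fix x assume "x \<in> {(z \<bullet> v) / (norm z * norm v) | z. z \<bullet> u = 0}"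
  then obtain z where "z \<bullet> u = 0" "x = (z \<bullet> v) / (norm z * norm v)" by blast
  then show "x \<le> B" using assms by simp
qed

lemma perp_le_vdist:
  fixes u v :: "real^'a::finite"
  assumes u: "norm u = 1" and v: "norm v = 1"
  shows "norm (u - (u \<bullet> v) *\<^sub>R v) \<le> vdist u v"
proof -
  let ?x = "u \<bullet> v"
  let ?z = "v - ?x *\<^sub>R u"
  have uu: "u \<bullet> u = 1" and vv: "v \<bullet> v = 1" using u v by (simp_all add: norm_eq_1)
  have "?z \<bullet> u = v \<bullet> u - ?x * (u \<bullet> u)" by (simp add: inner_diff_left)
  then have zu: "?z \<bullet> u = 0" using uu by (simp add: inner_commute)
  have zv: "?z \<bullet> v = 1 - ?x^2" using vv by (simp add: inner_diff_left power2_eq_square)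
  have nz: "norm ?z ^ 2 = 1 - ?x^2" unfolding power2_norm_eq_inner using uu vv
    by (simp add: inner_diff_left inner_diff_right inner_commute power2_eq_square algebra_simps)
  have np: "norm (u - ?x *\<^sub>R v) ^ 2 = 1 - ?x^2" unfolding power2_norm_eq_inner using uu vv
    by (simp add: inner_diff_left inner_diff_right inner_commute power2_eq_square algebra_simps)
  have eqn: "norm (u - ?x *\<^sub>R v) = norm ?z" using nz np
    by (metis norm_ge_zero power2_eq_imp_eq)
  have "(?z \<bullet> v) / (norm ?z * norm v) = norm ?z ^ 2 / norm ?z"
    using zv nz v by simp
  also have "\<dots> = norm ?z" by (cases "norm ?z = 0") (simp_all add: power2_eq_square)
  finally have "(?z \<bullet> v) / (norm ?z * norm v) = norm ?z" .
  moreover have "(?z \<bullet> v) / (norm ?z * norm v) \<le> vdist u v"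
    unfolding vdist_def by (rule cSup_upper[OF _ vdist_bdd]) (use zu in blast)
  ultimately show ?thesis using eqn by simp
qed

lemma colmat_bl: "bounded_linear (\<lambda>x::real^'k::finite. \<Sum>i\<in>UNIV. x$i *\<^sub>R (a i :: real^'d::finite))"
  by (intro bounded_linear_sum bounded_linear_compose[OF bounded_linear_scaleR_left] bounded_linear_vec_nth)

lemma colmat_le: "norm (\<Sum>i\<in>UNIV. x$i *\<^sub>R a i) \<le> colmat_norm a * norm x"
  unfolding colmat_norm_def by (rule onorm[OF colmat_bl])

lemma colmat_nonneg: "colmat_norm a \<ge> 0"
  unfolding colmat_norm_def by (rule onorm_pos_le[OF colmat_bl])

lemma adj_le: "norm (\<chi> i. a i \<bullet> p) \<le> colmat_norm a * norm p"
proof -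
  define y where "y = (\<chi> i. a i \<bullet> p)"
  have yi: "y$i = a i \<bullet> p" for i unfolding y_def by simp
  have "norm y ^ 2 = y \<bullet> y" by (rule power2_norm_eq_inner)
  also have "\<dots> = (\<Sum>i\<in>UNIV. y$i * y$i)" by (simp only: inner_vec_def inner_real_def)
  also have "\<dots> = (\<Sum>i\<in>UNIV. (y$i *\<^sub>R a i) \<bullet> p)" by (simp only: yi inner_scaleR_left)
  also have "\<dots> = (\<Sum>i\<in>UNIV. y$i *\<^sub>R a i) \<bullet> p" by (simp only: inner_sum_left)
  also have "\<dots> \<le> norm (\<Sum>i\<in>UNIV. y$i *\<^sub>R a i) * norm p"
    by (rule norm_cauchy_schwarz)
  also have "\<dots> \<le> (colmat_norm a * norm y) * norm p"
    by (rule mult_right_mono[OF colmat_le norm_ge_zero])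
  also have "\<dots> = (colmat_norm a * norm p) * norm y" by (simp only: mult_ac)
  finally have h: "norm y * norm y \<le> (colmat_norm a * norm p) * norm y"
    by (simp only: power2_eq_square)
  have "norm y \<le> colmat_norm a * norm p"
  proof (cases "norm y = 0")
    case True then show ?thesis using colmat_nonneg[of a] by simp
  next
    case False then have "norm y > 0" by simp
    then show ?thesis using h by (rule mult_right_le_imp_le[rotated])
  qed
  then show ?thesis unfolding y_def .
qed

lemma cross_le:
  assumes f: "\<And>i. \<bar>f i\<bar> \<le> m" and m: "m \<ge> 0"
  shows "norm (\<Sum>i\<in>UNIV. (f i * (b i \<bullet> p)) *\<^sub>R c i) \<le> colmat_norm c * (m * (colmat_norm b * norm p))"
proof -
  define y where "y = (\<chi> i. b i \<bullet> p)"
  define x where "x = (\<chi> i. f i * (b i \<bullet> p))"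
  have yi: "y$i = b i \<bullet> p" for i unfolding y_def by simp
  have xi: "x$i = f i * y$i" for i unfolding x_def yi by simp
  have "norm x ^ 2 = (\<Sum>i\<in>UNIV. x$i * x$i)"
    by (simp only: power2_norm_eq_inner inner_vec_def inner_real_def)
  also have "\<dots> \<le> (\<Sum>i\<in>UNIV. m^2 * (y$i * y$i))"
  proof (rule sum_mono)
    fix i
    have "\<bar>f i\<bar>^2 \<le> m^2" using f[of i] by (intro power_mono) auto
    then have "(f i)^2 * (y$i * y$i) \<le> m^2 * (y$i * y$i)" by (intro mult_right_mono) auto
    then show "x$i * x$i \<le> m^2 * (y$i * y$i)" by (simp only: xi power2_eq_square mult_ac)
  qed
  also have "\<dots> = m^2 * (\<Sum>i\<in>UNIV. y$i * y$i)" by (simp only: sum_distrib_left)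
  also have "\<dots> = (m * norm y)^2"
  proof -
    have "(\<Sum>i\<in>UNIV. y$i * y$i) = norm y ^ 2"
      by (simp only: power2_norm_eq_inner inner_vec_def inner_real_def)
    then show ?thesis by (simp only: power_mult_distrib)
  qed
  finally have sq: "norm x ^ 2 \<le> (m * norm y)^2" .
  have "norm x \<le> m * norm y"
    using m by (intro power2_le_imp_le[OF sq]) simp
  also have "\<dots> \<le> m * (colmat_norm b * norm p)"
    using m adj_le[of b p] unfolding y_def by (intro mult_left_mono) auto
  finally have hx: "norm x \<le> m * (colmat_norm b * norm p)" .
  have "(\<Sum>i\<in>UNIV. (f i * (b i \<bullet> p)) *\<^sub>R c i) = (\<Sum>i\<in>UNIV. x$i *\<^sub>R c i)"
    unfolding x_def by simp
  then have "norm (\<Sum>i\<in>UNIV. (f i * (b i \<bullet> p)) *\<^sub>R c i) \<le> colmat_norm c * norm x"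
    using colmat_le[of x c] by simp
  also have "\<dots> \<le> colmat_norm c * (m * (colmat_norm b * norm p))"
    using hx colmat_nonneg[of c] by (intro mult_left_mono) auto
  finally show ?thesis .
qed




lemma sum_diff_if: "(\<Sum>i\<in>UNIV - {j}. g i) = (\<Sum>i\<in>(UNIV::'k::finite set). if i = j then 0 else g i)"
  by (simp add: sum.If_cases Diff_eq Compl_eq)

lemma unit_decomp:
  fixes u v :: "real^'d::finite"
  assumes u: "norm u = 1" and v: "norm v = 1" and e: "vdist u v \<le> e"
  shows "u = (u \<bullet> v) *\<^sub>R v + (u - (u \<bullet> v) *\<^sub>R v)" "v \<bullet> (u - (u \<bullet> v) *\<^sub>R v) = 0"
    "norm (u - (u \<bullet> v) *\<^sub>R v) \<le> e" "(u \<bullet> v)^2 \<ge> 1 - e^2" "\<bar>u \<bullet> v\<bar> \<le> 1" "0 \<le> e"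
proof -
  show "u = (u \<bullet> v) *\<^sub>R v + (u - (u \<bullet> v) *\<^sub>R v)" by simp
  have vv: "v \<bullet> v = 1" "u \<bullet> u = 1" using u v by (simp_all add: norm_eq_1)
  show "v \<bullet> (u - (u \<bullet> v) *\<^sub>R v) = 0" using vv by (simp add: inner_diff_right inner_commute)
  have pe: "norm (u - (u \<bullet> v) *\<^sub>R v) \<le> e" using perp_le_vdist[OF u v] e by linarith
  then show "norm (u - (u \<bullet> v) *\<^sub>R v) \<le> e" .
  show e0: "0 \<le> e" using pe norm_ge_zero order_trans by blast
  have np: "norm (u - (u \<bullet> v) *\<^sub>R v) ^ 2 = 1 - (u \<bullet> v)^2" unfolding power2_norm_eq_inner using vv
    by (simp add: inner_diff_left inner_diff_right inner_commute power2_eq_square algebra_simps)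
  have "norm (u - (u \<bullet> v) *\<^sub>R v) ^ 2 \<le> e^2" using pe by (intro power_mono) auto
  then show "(u \<bullet> v)^2 \<ge> 1 - e^2" using np by linarith
  have "\<bar>u \<bullet> v\<bar> \<le> norm u * norm v" by (rule Cauchy_Schwarz_ineq2)
  then show "\<bar>u \<bullet> v\<bar> \<le> 1" using u v by simp
qed




theorem mainTheorem2:
  fixes w :: "'k::finite \<Rightarrow> real"
    and a b c :: "'k \<Rightarrow> real^'d::finite"
    and \<alpha> \<alpha>0 \<beta>' :: real
    and \<Psi> :: "'d tensor3"
    and j :: 'k
    and ah bh :: "real^'d"
  defines "wmax \<equiv> Max (range w)"
    and "wmin \<equiv> Min (range w)"
    and "dd \<equiv> real CARD('d)"
    and "kk \<equiv> real CARD('k)"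
  defines "T \<equiv> cp_tensor w a b c"
  defines "q \<equiv> 2 * wmax / wmin * (2 * \<alpha> / sqrt dd * (1 + \<alpha>0 * sqrt (kk / dd))\<^sup>2 + \<beta>')"
    and "\<psi> \<equiv> tnorm \<Psi>"
  defines "Th \<equiv> (\<lambda>p r s. T p r s + \<Psi> p r s)"
  defines "\<epsilon>0 \<equiv> max (vdist ah (a j)) (vdist bh (b j))"
  defines "ch \<equiv> (1 / norm (tform_I Th ah bh)) *\<^sub>R tform_I Th ah bh"
  defines "Const \<equiv> 2 / wmin * (\<psi> + wmax * \<alpha> * sqrt kk / dd)"
  assumes w_pos: "\<And>i. w i > 0"
    and units: "\<And>i. norm (a i) = 1" "\<And>i. norm (b i) = 1" "\<And>i. norm (c i) = 1"
    and params: "\<alpha> > 0" "\<alpha>0 > 0" "\<beta>' > 0"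
    and hyp_i: "\<And>i i'. i \<noteq> i' \<Longrightarrow>
        max \<bar>a i \<bullet> a i'\<bar> (max \<bar>b i \<bullet> b i'\<bar> \<bar>c i \<bullet> c i'\<bar>) \<le> \<alpha> / sqrt dd"
    and hyp_ii: "max (colmat_norm a) (max (colmat_norm b) (colmat_norm c)) \<le> 1 + \<alpha>0 * sqrt (kk / dd)"
    and hyp_iii1: "tnorm T \<le> \<alpha>0 * wmax"
    and hyp_iii2: "\<And>j'. norm (\<Sum>i\<in>UNIV - {j'}. (w i * (a i \<bullet> a j') * (b i \<bullet> b j')) *\<^sub>R c i)
                      \<le> \<alpha> * wmax * sqrt kk / dd"
    and q_small: "q < 1/2"
    and psi_small: "\<psi> \<le> wmin / 6"
    and unit_hat: "norm ah = 1" "norm bh = 1"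
    and eps_small: "\<epsilon>0 \<le> \<beta>' / \<alpha>0" "\<epsilon>0 \<le> sqrt (wmin / (6 * wmax))"
      "\<epsilon>0 \<le> wmin * q / (4 * wmax)"
      "\<epsilon>0 \<le> 2 * wmax / (wmin * q) * (wmin / (6 * wmax) - \<alpha> * sqrt kk / dd)"
  shows "vdist ch (c j) \<le> Const + q * \<epsilon>0
    \<and> (vdist ch (c j) \<le> \<epsilon>0 \<longrightarrow> \<bar>tform Th ah bh ch - w j\<bar> \<le> wmin / 2 * Const + wmin * q * \<epsilon>0)"
  proof -
  have fin: "finite (range w)" by simp
  have wle: "w i \<le> wmax" for i unfolding wmax_def by (rule Max_ge) auto
  have wge: "wmin \<le> w i" for i unfolding wmin_def by (rule Min_le) auto
  have "wmin \<in> range w" unfolding wmin_def by (rule Min_in) auto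
  then have wmin_pos: "wmin > 0" using w_pos by auto
  have wmax_pos: "wmax > 0" using wle[of j] w_pos[of j] by linarith
  have dd_pos: "dd > 0" unfolding dd_def by simp
  have sdd: "sqrt dd > 0" using dd_pos by simp
  define M where "M = 1 + \<alpha>0 * sqrt (kk / dd)"
  have "sqrt (kk / dd) \<ge> 0" unfolding kk_def dd_def by simp
  then have M_pos: "M \<ge> 0" unfolding M_def using params by simp
  have Ma: "colmat_norm a \<le> M" and Mb: "colmat_norm b \<le> M" and Mc: "colmat_norm c \<le> M"
    using hyp_ii unfolding M_def by linarith+
  define K where "K = 2 * \<alpha> / sqrt dd * M\<^sup>2 + \<beta>'"
  have "2 * \<alpha> / sqrt dd * M\<^sup>2 \<ge> 0" using params sdd by simp
  then have K_pos: "K > 0" unfolding K_def using params by linarith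
  have qK: "q = 2 * wmax / wmin * K" unfolding q_def K_def M_def ..
  have eae: "vdist ah (a j) \<le> \<epsilon>0" and ebe: "vdist bh (b j) \<le> \<epsilon>0" unfolding \<epsilon>0_def by auto
  define x where "x = ah \<bullet> a j"
  define y where "y = bh \<bullet> b j"
  define pa where "pa = ah - x *\<^sub>R a j"
  define pb where "pb = bh - y *\<^sub>R b j"
  note da = unit_decomp[OF unit_hat(1) units(1)[of j] eae, folded x_def, folded pa_def]
  note db = unit_decomp[OF unit_hat(2) units(2)[of j] ebe, folded y_def, folded pb_def]
  have ah_eq: "ah = x *\<^sub>R a j + pa" using da(1) .
  have bh_eq: "bh = y *\<^sub>R b j + pb" using db(1) .
  have e0: "\<epsilon>0 \<ge> 0" using da(6) .
  have e2: "\<epsilon>0^2 \<le> wmin / (6 * wmax)"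
  proof -
    have "\<epsilon>0^2 \<le> (sqrt (wmin / (6 * wmax)))^2" using eps_small(2) e0 by (intro power_mono) auto
    then show ?thesis using wmin_pos wmax_pos by simp
  qed
  have wmm: "wmin \<le> wmax" using wge[of j] wle[of j] by linarith
  have "wmin / (6 * wmax) \<le> 1" using wmm wmax_pos by (simp add: divide_le_eq)
  then have e2': "\<epsilon>0^2 \<le> 1" using e2 by linarith
  have xy_lo: "1 - \<epsilon>0^2 \<le> \<bar>x * y\<bar>"
  proof -
    have "(1 - \<epsilon>0^2) * (1 - \<epsilon>0^2) \<le> x^2 * y^2"
      using da(4) db(4) e2' by (intro mult_mono) auto
    then have "(1 - \<epsilon>0^2)^2 \<le> \<bar>x * y\<bar>^2" by (simp add: power2_eq_square power_mult_distrib mult_ac)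
    then show ?thesis by (rule power2_le_imp_le) simp
  qed
  have xy_hi: "\<bar>x * y\<bar> \<le> 1" using da(5) db(5) by (simp add: abs_mult mult_le_one)
  define S where "S u v = (\<Sum>i\<in>UNIV - {j}. (w i * (a i \<bullet> u) * (b i \<bullet> v)) *\<^sub>R c i)" for u v
  have TI: "tform_I T u v = (w j * (a j \<bullet> u) * (b j \<bullet> v)) *\<^sub>R c j + S u v" for u v
    unfolding T_def tform_I_cp S_def by (simp add: sum.remove)
  define E where "E = (\<Sum>i\<in>UNIV - {j}. (w i * (a i \<bullet> a j) * (b i \<bullet> b j)) *\<^sub>R c i)"
  define Cb where "Cb = (\<Sum>i\<in>UNIV - {j}. (w i * (a i \<bullet> a j) * (b i \<bullet> pb)) *\<^sub>R c i)"
  define Ca where "Ca = (\<Sum>i\<in>UNIV - {j}. (w i * (a i \<bullet> pa) * (b i \<bullet> b j)) *\<^sub>R c i)"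
  have Sexp: "S ah bh = (x * y) *\<^sub>R E + x *\<^sub>R Cb + y *\<^sub>R Ca + S pa pb"
  proof -
    have "(w i * (a i \<bullet> ah) * (b i \<bullet> bh)) *\<^sub>R c i
       = (x * y) *\<^sub>R ((w i * (a i \<bullet> a j) * (b i \<bullet> b j)) *\<^sub>R c i)
         + x *\<^sub>R ((w i * (a i \<bullet> a j) * (b i \<bullet> pb)) *\<^sub>R c i)
         + y *\<^sub>R ((w i * (a i \<bullet> pa) * (b i \<bullet> b j)) *\<^sub>R c i)
         + (w i * (a i \<bullet> pa) * (b i \<bullet> pb)) *\<^sub>R c i" for i
    proof -
      have "w i * (a i \<bullet> ah) * (b i \<bullet> bh) = (x * y) * (w i * (a i \<bullet> a j) * (b i \<bullet> b j))
         + x * (w i * (a i \<bullet> a j) * (b i \<bullet> pb)) + y * (w i * (a i \<bullet> pa) * (b i \<bullet> b j))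
         + (w i * (a i \<bullet> pa) * (b i \<bullet> pb))"
        by (subst ah_eq, subst bh_eq) (simp add: inner_add_right algebra_simps)
      then show ?thesis by (simp add: scaleR_add_left)
    qed
    then show ?thesis unfolding S_def E_def Cb_def Ca_def
      by (simp add: sum.distrib scaleR_sum_right)
  qed
  have P_eq: "S pa pb = tform_I T pa pb" using TI[of pa pb] da(2) by simp
  define m where "m = wmax * (\<alpha> / sqrt dd)"
  have m_pos: "m \<ge> 0" unfolding m_def using wmax_pos params sdd by simp
  have inc: "\<bar>w i * s\<bar> \<le> m" if "\<bar>s\<bar> \<le> \<alpha> / sqrt dd" for i s
  proof -
    have "\<bar>w i * s\<bar> = w i * \<bar>s\<bar>" using w_pos[of i] by (simp add: abs_mult)
    also have "\<dots> \<le> wmax * (\<alpha> / sqrt dd)" using wle[of i] that w_pos[of i] by (intro mult_mono) auto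
    finally show ?thesis unfolding m_def .
  qed
  have crossM: "colmat_norm c * (m * (colmat_norm b' * norm p)) \<le> M * (m * (M * \<epsilon>0))"
    if "colmat_norm b' \<le> M" "norm p \<le> \<epsilon>0" for b' :: "'k \<Rightarrow> real^'d" and p :: "real^'d"
  proof -
    have "colmat_norm b' * norm p \<le> M * \<epsilon>0" using that colmat_nonneg[of b'] by (intro mult_mono) auto
    then have "m * (colmat_norm b' * norm p) \<le> m * (M * \<epsilon>0)" using m_pos by (intro mult_left_mono)
    then show ?thesis
      by (rule mult_mono[OF Mc _ M_pos]) (use m_pos colmat_nonneg[of b'] in simp)
  qed
  have Cb_le: "norm Cb \<le> M * (m * (M * \<epsilon>0))"
  proof -
    define f where "f i = (if i = j then 0 else w i * (a i \<bullet> a j))" for i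
    have "Cb = (\<Sum>i\<in>UNIV. (f i * (b i \<bullet> pb)) *\<^sub>R c i)"
      unfolding Cb_def f_def sum_diff_if by (intro sum.cong) auto
    moreover have fb: "\<bar>f i\<bar> \<le> m" for i
    proof (cases "i = j")
      case True then show ?thesis using m_pos unfolding f_def by simp
    next
      case False then have "\<bar>a i \<bullet> a j\<bar> \<le> \<alpha> / sqrt dd" using hyp_i[OF False] by linarith
      then show ?thesis using inc False unfolding f_def by simp
    qed
    ultimately have "norm Cb \<le> colmat_norm c * (m * (colmat_norm b * norm pb))"
      using cross_le[of f m b pb c, OF fb m_pos] by simp
    also have "\<dots> \<le> M * (m * (M * \<epsilon>0))" using crossM[OF Mb db(3)] .
    finally show ?thesis .
  qed
  have Ca_le: "norm Ca \<le> M * (m * (M * \<epsilon>0))"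
  proof -
    define f where "f i = (if i = j then 0 else w i * (b i \<bullet> b j))" for i
    have "Ca = (\<Sum>i\<in>UNIV. (f i * (a i \<bullet> pa)) *\<^sub>R c i)"
      unfolding Ca_def f_def sum_diff_if by (intro sum.cong) (auto simp: mult_ac)
    moreover have fb: "\<bar>f i\<bar> \<le> m" for i
    proof (cases "i = j")
      case True then show ?thesis using m_pos unfolding f_def by simp
    next
      case False then have "\<bar>b i \<bullet> b j\<bar> \<le> \<alpha> / sqrt dd" using hyp_i[OF False] by linarith
      then show ?thesis using inc False unfolding f_def by simp
    qed
    ultimately have "norm Ca \<le> colmat_norm c * (m * (colmat_norm a * norm pa))"
      using cross_le[of f m a pa c, OF fb m_pos] by simp
    also have "\<dots> \<le> M * (m * (M * \<epsilon>0))" using crossM[OF Ma da(3)] .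
    finally show ?thesis .
  qed
  have E_le: "norm E \<le> wmax * \<alpha> * sqrt kk / dd"
    using hyp_iii2[of j] unfolding E_def by (simp add: mult_ac)
  have P_le: "norm (S pa pb) \<le> wmax * \<beta>' * \<epsilon>0"
  proof -
    have "norm (S pa pb) \<le> tnorm T * norm pa * norm pb" unfolding P_eq by (rule tform_I_le)
    also have "\<dots> \<le> (\<alpha>0 * wmax) * \<epsilon>0 * \<epsilon>0"
      using hyp_iii1 da(3) db(3) tnorm_nonneg[of T] params wmax_pos e0 by (intro mult_mono) auto
    also have "\<dots> \<le> wmax * \<beta>' * \<epsilon>0"
    proof -
      have "\<alpha>0 * \<epsilon>0 \<le> \<beta>'" using eps_small(1) params by (simp add: le_divide_eq mult.commute)
      then have "wmax * (\<alpha>0 * \<epsilon>0) * \<epsilon>0 \<le> wmax * \<beta>' * \<epsilon>0" using wmax_pos e0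
        by (intro mult_right_mono mult_left_mono) auto
      then show ?thesis by (simp add: mult_ac)
    qed
    finally show ?thesis .
  qed
  have Psi_le: "norm (tform_I \<Psi> ah bh) \<le> \<psi>"
    using tform_I_le[of \<Psi> ah bh] unit_hat unfolding \<psi>_def by simp
  define R where "R = S ah bh + tform_I \<Psi> ah bh"
  define t where "t = w j * x * y"
  define v where "v = tform_I Th ah bh"
  have v_eq: "v = t *\<^sub>R c j + R"
    unfolding v_def Th_def tform_I_add TI R_def t_def x_def y_def by (simp add: inner_commute)
  define Rb where "Rb = \<psi> + wmax * \<alpha> * sqrt kk / dd + wmax * \<epsilon>0 * K"
  have R_le: "norm R \<le> Rb"
  proof -
    have "norm R \<le> norm ((x * y) *\<^sub>R E) + norm (x *\<^sub>R Cb) + norm (y *\<^sub>R Ca) + norm (S pa pb) + norm (tform_I \<Psi> ah bh)"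
      unfolding R_def Sexp by (intro norm_triangle_le add_mono order_refl norm_triangle_ineq)
    also have "\<dots> \<le> norm E + norm Cb + norm Ca + wmax * \<beta>' * \<epsilon>0 + \<psi>"
    proof -
      have "norm ((x * y) *\<^sub>R E) \<le> norm E" using xy_hi by (simp add: mult_left_le_one_le)
      moreover have "norm (x *\<^sub>R Cb) \<le> norm Cb" using da(5) by (simp add: mult_left_le_one_le)
      moreover have "norm (y *\<^sub>R Ca) \<le> norm Ca" using db(5) by (simp add: mult_left_le_one_le)
      ultimately show ?thesis using P_le Psi_le by linarith
    qed
    also have "\<dots> \<le> Rb"
    proof -
      have "2 * (M * (m * (M * \<epsilon>0))) + wmax * \<beta>' * \<epsilon>0 = wmax * \<epsilon>0 * K"
        unfolding K_def m_def using sdd by (simp add: field_simps power2_eq_square)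
      then show ?thesis unfolding Rb_def using E_le Cb_le Ca_le by linarith
    qed
    finally show ?thesis .
  qed
  have KE: "wmax * \<epsilon>0 * K \<le> wmin / 6 - wmax * \<alpha> * sqrt kk / dd"
  proof -
    have "2 * wmax / (wmin * q) = 1 / K" unfolding qK using wmin_pos wmax_pos K_pos by (simp add: field_simps)
    then have "\<epsilon>0 \<le> (wmin / (6 * wmax) - \<alpha> * sqrt kk / dd) / K" using eps_small(4) by simp
    then have "\<epsilon>0 * K \<le> wmin / (6 * wmax) - \<alpha> * sqrt kk / dd" using K_pos by (simp add: le_divide_eq)
    then have "wmax * (\<epsilon>0 * K) \<le> wmax * (wmin / (6 * wmax) - \<alpha> * sqrt kk / dd)"
      using wmax_pos by (intro mult_left_mono) auto
    moreover have "wmax * (wmin / (6 * wmax) - \<alpha> * sqrt kk / dd) = wmin / 6 - wmax * \<alpha> * sqrt kk / dd"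
      using wmax_pos by (simp add: field_simps)
    ultimately show ?thesis by (simp add: mult.assoc)
  qed
  have psi_nn: "\<psi> \<ge> 0" unfolding \<psi>_def by (rule tnorm_nonneg)
  have Rb_small: "Rb \<le> wmin / 3" unfolding Rb_def using KE psi_small by linarith
  have t_lo: "\<bar>t\<bar> \<ge> 5 * wmin / 6"
  proof -
    have "\<bar>t\<bar> = w j * \<bar>x * y\<bar>" unfolding t_def using w_pos[of j] by (simp add: abs_mult mult.assoc)
    also have "\<dots> \<ge> w j * (1 - \<epsilon>0^2)" using xy_lo w_pos[of j] by (intro mult_left_mono) auto
    finally have h1: "\<bar>t\<bar> \<ge> w j - w j * \<epsilon>0^2" by (simp add: algebra_simps)
    have "w j * \<epsilon>0^2 \<le> wmax * (wmin / (6 * wmax))" using wle[of j] e2 w_pos[of j]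
      by (intro mult_mono) auto
    then have "w j * \<epsilon>0^2 \<le> wmin / 6" using wmax_pos by simp
    then show ?thesis using h1 wge[of j] by linarith
  qed
  have Rb_eq: "wmin / 2 * (Const + q * \<epsilon>0) = Rb"
    unfolding Const_def qK Rb_def using wmin_pos by (simp add: field_simps)
  have v_nz: "v \<noteq> 0"
  proof
    assume "v = 0"
    then have "t *\<^sub>R c j = - R" using v_eq by (simp add: eq_neg_iff_add_eq_0)
    then have "norm (t *\<^sub>R c j) = norm R" by simp
    then have "\<bar>t\<bar> = norm R" using units(3)[of j] by simp
    then show False using R_le Rb_small t_lo wmin_pos by linarith
  qed
  have ch_eq: "ch = (1 / norm v) *\<^sub>R v" unfolding ch_def v_def ..
  have part1: "vdist ch (c j) \<le> Const + q * \<epsilon>0"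
  proof (rule vdist_le)
    fix z assume zc: "z \<bullet> ch = 0"
    have zv: "z \<bullet> v = 0" using zc v_nz unfolding ch_eq by simp
    then have "t * (z \<bullet> c j) = - (z \<bullet> R)" unfolding v_eq by (simp add: inner_add_right)
    then have "\<bar>t\<bar> * \<bar>z \<bullet> c j\<bar> = \<bar>z \<bullet> R\<bar>" by (metis abs_minus_cancel abs_mult)
    also have "\<dots> \<le> norm z * norm R" by (rule Cauchy_Schwarz_ineq2)
    also have "\<dots> \<le> norm z * Rb" using R_le by (intro mult_left_mono) auto
    finally have h: "\<bar>t\<bar> * \<bar>z \<bullet> c j\<bar> \<le> norm z * Rb" .
    have B_nn: "Const + q * \<epsilon>0 \<ge> 0" using Rb_eq R_le wmin_pos
      by (metis norm_ge_zero order_trans zero_le_mult_iff half_gt_zero less_eq_real_def not_less)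
    show "(z \<bullet> c j) / (norm z * norm (c j)) \<le> Const + q * \<epsilon>0"
    proof (cases "z = 0")
      case True then show ?thesis using B_nn by simp
    next
      case False
      then have nz: "norm z > 0" by simp
      have "(wmin / 2) * \<bar>z \<bullet> c j\<bar> \<le> \<bar>t\<bar> * \<bar>z \<bullet> c j\<bar>"
        using t_lo wmin_pos by (intro mult_right_mono) auto
      also have "\<dots> \<le> norm z * ((wmin / 2) * (Const + q * \<epsilon>0))" using h Rb_eq by simp
      finally have "\<bar>z \<bullet> c j\<bar> \<le> norm z * (Const + q * \<epsilon>0)" using wmin_pos
        by (simp add: mult.left_commute[of "norm z"])
      then have "(z \<bullet> c j) \<le> norm z * (Const + q * \<epsilon>0)" by linarith
      then show ?thesis using nz units(3)[of j] by (simp add: divide_le_eq mult.commute)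
    qed
  qed
  have part2: "\<bar>tform Th ah bh ch - w j\<bar> \<le> wmin / 2 * Const + wmin * q * \<epsilon>0"
  proof -
    have "tform Th ah bh ch = norm v"
      unfolding tform_eq ch_eq v_def[symmetric] using v_nz
      by (simp add: power2_norm_eq_inner[symmetric] power2_eq_square)
    moreover have "norm v \<le> \<bar>t\<bar> + norm R" unfolding v_eq
      using norm_triangle_ineq[of "t *\<^sub>R c j" R] units(3)[of j] by simp
    moreover have "norm v \<ge> \<bar>t\<bar> - norm R" unfolding v_eq
      using norm_diff_ineq[of "t *\<^sub>R c j" R] units(3)[of j] by simp
    moreover have "\<bar>t\<bar> \<le> w j" unfolding t_def using xy_hi w_pos[of j]
      by (simp add: abs_mult mult.assoc mult_left_le)
    moreover have "\<bar>t\<bar> \<ge> w j - w j * \<epsilon>0^2"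
    proof -
      have "\<bar>t\<bar> = w j * \<bar>x * y\<bar>" unfolding t_def using w_pos[of j] by (simp add: abs_mult mult.assoc)
      also have "\<dots> \<ge> w j * (1 - \<epsilon>0^2)" using xy_lo w_pos[of j] by (intro mult_left_mono) auto
      finally show ?thesis by (simp add: algebra_simps)
    qed
    moreover have "w j * \<epsilon>0^2 \<le> wmax * \<epsilon>0 * K"
    proof -
      have "\<epsilon>0 \<le> K / 2" using eps_small(3) unfolding qK using wmin_pos wmax_pos by (simp add: field_simps)
      then have "w j * \<epsilon>0 * \<epsilon>0 \<le> wmax * \<epsilon>0 * (K / 2)" using wle[of j] w_pos[of j] e0
        by (intro mult_mono) auto
      moreover have "wmax * \<epsilon>0 * (K / 2) = (wmax * \<epsilon>0 * K) / 2" by simp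
      moreover have "0 \<le> wmax * \<epsilon>0 * K" using wmax_pos e0 K_pos by simp
      moreover have "w j * \<epsilon>0^2 = w j * \<epsilon>0 * \<epsilon>0" by (simp add: power2_eq_square)
      ultimately show ?thesis by linarith
    qed
    moreover have "wmin / 2 * Const + wmin * q * \<epsilon>0 = Rb + wmax * \<epsilon>0 * K"
      unfolding Const_def qK Rb_def using wmin_pos by (simp add: field_simps)
    ultimately show ?thesis using R_le by linarith
  qed
  show ?thesis using part1 part2 by blast
qed


end
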